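(* Let $\Omega\subset\mathbb{R}^d$ ($d\in\{2,3\}$) be a domain with a Cartesian (axis-aligned) mesh $\mathcal{T}_h$ of $\Omega$ into boxes, let $\mathcal{F}_h$ be the set of its interior and boundary faces, and let $V_h$ be the discontinuous finite element space of functions whose restriction to each cell $K\in\mathcal{T}_h$ lies in $\mathbb{Q}_k$ ($k\ge 1$). Let $a_h$ be the symmetric interior penalty bilinear form $$a_h(u,v)=\sum_{K\in\mathcal{T}_h}\int_K\nabla u\cdot\nabla v\,dx+\sum_{F\in\mathcal{F}_h}\int_F\Big(\gamma_F\,[\![u]\!]\cdot[\![v]\!]-\{\nabla u\}\cdot[\![v]\!]-[\![u]\!]\cdot\{\nabla v\}\Big)\,d\sigma,$$ with any penalty values $\gamma_F>0$. Let $P_j$ be a vertex patch, i.e. the union of the cells of $\mathcal{T}_h$ sharing a given mesh vertex, and define $$V_j=\{v\in V_h:\ v=0 \text{ on every cell not contained in } P_j,\ \text{and on each cell } K\subset P_j,\ v|_K=0 \text{ and } \partial_n (v|_K)=0 \text{ on } \partial K\cap\partial P_j\},$$ where $\partial_n$ is the derivative in the direction normal to the face. Then for all $u,w\in V_h$ with $u|_K=w|_K$ for every cell $K\subset P_j$, and for all $v\in V_j$, one has $a_h(u,v)=a_h(w,v)$. In other words, the residual $b-Au$ tested against $V_j$ depends only on the values of $u$ on the cells of the patch $P_j$.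
   Context: Jumps and averages: on an interior face $F$ shared by cells $K^+$ and $K^-$ with outward unit normals $n^+$, $n^-=-n^+$ and traces $u^\pm$, set $\{u\}=\tfrac12(u^++u^-)$, $\{\nabla u\}=\tfrac12(\nabla u^++\nabla u^-)$ and $[\![u]\!]=u^+n^++u^-n^-$. On a boundary face (on $\partial\Omega$) with interior trace $u$ and outward normal $n$, set $\{\nabla u\}=\nabla u$ and $[\![u]\!]=u\,n$. $\mathbb{Q}_k$ denotes tensor-product polynomials of degree at most $k$ in each coordinate. The matrix $A$ represents $a_h$ in a basis of $V_h$ and $b$ is a right-hand side vector. *)

theory Defs
  imports "HOL-Analysis.Analysis"
begin

text \<open>Cartesian mesh: a tensor-product grid in each direction i given by strictly increasing
grid lines t i :: int \<Rightarrow> real; cells are indexed by integer multi-indices m :: 'n \<Rightarrow> int;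
the mesh is a finite set M of multi-indices.\<close>

definition cell :: "('n::finite \<Rightarrow> int \<Rightarrow> real) \<Rightarrow> ('n \<Rightarrow> int) \<Rightarrow> (real^'n) set" where
  "cell t m = cbox (\<chi> i. t i (m i)) (\<chi> i. t i (m i + 1))"

definition shift :: "('n \<Rightarrow> int) \<Rightarrow> 'n \<Rightarrow> ('n \<Rightarrow> int)" where
  "shift m i = m(i := m i + 1)"

definition Qk :: "nat \<Rightarrow> (real^'n::finite \<Rightarrow> real) set" where
  "Qk k = {f. \<exists>c :: ('n \<Rightarrow> nat) \<Rightarrow> real.
             f = (\<lambda>x. \<Sum>\<alpha>\<in>{\<alpha>. \<forall>i. \<alpha> i \<le> k}. c \<alpha> * (\<Prod>i\<in>UNIV. (x $ i) ^ (\<alpha> i)))}"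

text \<open>Discrete functions: one polynomial per cell (values outside M are irrelevant).\<close>
definition Vh :: "nat \<Rightarrow> ('n::finite \<Rightarrow> int) set \<Rightarrow> (('n \<Rightarrow> int) \<Rightarrow> real^'n \<Rightarrow> real) set" where
  "Vh k M = {u. \<forall>m\<in>M. u m \<in> Qk k}"

definition partial :: "(real^'n::finite \<Rightarrow> real) \<Rightarrow> 'n \<Rightarrow> real^'n \<Rightarrow> real" where
  "partial f i x = deriv (\<lambda>s. f (x + s *\<^sub>R axis i 1)) 0"

definition grad :: "(real^'n::finite \<Rightarrow> real) \<Rightarrow> real^'n \<Rightarrow> real^'n" where
  "grad f x = (\<chi> i. partial f i x)"

text \<open>Faces: (m,i) is the face orthogonal to e_i between cell m (below, outward normal e_i)
and cell shift m i (above, outward normal -e_i); it belongs to the mesh iff at least one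
of the two cells is in M (boundary face iff exactly one is).\<close>
definition faces :: "('n::finite \<Rightarrow> int) set \<Rightarrow> (('n \<Rightarrow> int) \<times> 'n) set" where
  "faces M = {(m, i). m \<in> M \<or> shift m i \<in> M}"

definition jump :: "('n::finite \<Rightarrow> int) set \<Rightarrow> (('n \<Rightarrow> int) \<Rightarrow> real^'n \<Rightarrow> real)
                     \<Rightarrow> ('n \<Rightarrow> int) \<Rightarrow> 'n \<Rightarrow> real^'n \<Rightarrow> real^'n" where
  "jump M u m i x =
     (if m \<in> M then u m x *\<^sub>R axis i 1 else 0) +
     (if shift m i \<in> M then u (shift m i) x *\<^sub>R (- axis i 1) else 0)"

definition avg_grad :: "('n::finite \<Rightarrow> int) set \<Rightarrow> (('n \<Rightarrow> int) \<Rightarrow> real^'n \<Rightarrow> real)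
                     \<Rightarrow> ('n \<Rightarrow> int) \<Rightarrow> 'n \<Rightarrow> real^'n \<Rightarrow> real^'n" where
  "avg_grad M u m i x =
     (if m \<in> M \<and> shift m i \<in> M then (1/2) *\<^sub>R (grad (u m) x + grad (u (shift m i)) x)
      else if m \<in> M then grad (u m) x else grad (u (shift m i)) x)"

text \<open>Surface integral over the face (m,i): the face lies in the hyperplane
x_i = t i (m i + 1); we integrate g restricted to the hyperplane over the (d-1)-box,
realised as a d-dimensional integral over the box thickened to [0,1] in direction i
(the integrand being constant in x_i), which equals the (d-1)-dimensional integral.\<close>
definition face_int :: "('n::finite \<Rightarrow> int \<Rightarrow> real) \<Rightarrow> ('n \<Rightarrow> int) \<Rightarrow> 'n
                         \<Rightarrow> (real^'n \<Rightarrow> real) \<Rightarrow> real" where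
  "face_int t m i g =
     integral (cbox (\<chi> j. if j = i then 0 else t j (m j)) (\<chi> j. if j = i then 1 else t j (m j + 1)))
              (\<lambda>x. g (\<chi> j. if j = i then t i (m i + 1) else x $ j))"

definition a_h :: "('n::finite \<Rightarrow> int \<Rightarrow> real) \<Rightarrow> ('n \<Rightarrow> int) set \<Rightarrow> ((('n \<Rightarrow> int) \<times> 'n) \<Rightarrow> real)
                  \<Rightarrow> (('n \<Rightarrow> int) \<Rightarrow> real^'n \<Rightarrow> real) \<Rightarrow> (('n \<Rightarrow> int) \<Rightarrow> real^'n \<Rightarrow> real) \<Rightarrow> real" where
  "a_h t M \<gamma> u v =
     (\<Sum>m\<in>M. integral (cell t m) (\<lambda>x. grad (u m) x \<bullet> grad (v m) x)) +
     (\<Sum>(m, i)\<in>faces M. face_int t m i (\<lambda>x.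
         \<gamma> (m, i) * (jump M u m i x \<bullet> jump M v m i x)
         - avg_grad M u m i x \<bullet> jump M v m i x
         - jump M u m i x \<bullet> avg_grad M v m i x))"

text \<open>Vertex patch around the grid vertex with index q (point (t i (q i))_i):
the cells of M having this point as a vertex.\<close>
definition patch_cells :: "('n::finite \<Rightarrow> int) set \<Rightarrow> ('n \<Rightarrow> int) \<Rightarrow> ('n \<Rightarrow> int) set" where
  "patch_cells M q = {m \<in> M. \<forall>i. m i = q i - 1 \<or> m i = q i}"

definition patch :: "('n::finite \<Rightarrow> int \<Rightarrow> real) \<Rightarrow> ('n \<Rightarrow> int) set \<Rightarrow> ('n \<Rightarrow> int) \<Rightarrow> (real^'n) set" where
  "patch t M q = (\<Union>m\<in>patch_cells M q. cell t m)"

definition cell_face :: "('n::finite \<Rightarrow> int \<Rightarrow> real) \<Rightarrow> ('n \<Rightarrow> int) \<Rightarrow> 'n \<Rightarrow> real \<Rightarrow> (real^'n) set" where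
  "cell_face t m i c = {x \<in> cell t m. x $ i = c}"

definition Vj :: "nat \<Rightarrow> ('n::finite \<Rightarrow> int \<Rightarrow> real) \<Rightarrow> ('n \<Rightarrow> int) set \<Rightarrow> ('n \<Rightarrow> int)
                  \<Rightarrow> (('n \<Rightarrow> int) \<Rightarrow> real^'n \<Rightarrow> real) set" where
  "Vj k t M q = {v \<in> Vh k M.
      (\<forall>m\<in>M - patch_cells M q. \<forall>x\<in>cell t m. v m x = 0) \<and>
      (\<forall>m\<in>patch_cells M q. \<forall>i. \<forall>c\<in>{t i (m i), t i (m i + 1)}.
          cell_face t m i c \<subseteq> frontier (patch t M q) \<longrightarrow>
          (\<forall>x\<in>cell_face t m i c. v m x = 0 \<and> partial (v m) i x = 0))}"

end

theory Submission
  imports Defs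
begin

lemma differentiable_prod_fin:
  fixes f :: "'i \<Rightarrow> real \<Rightarrow> real"
  assumes "finite A" "\<And>a. a \<in> A \<Longrightarrow> f a differentiable (at s)"
  shows "(\<lambda>x. \<Prod>a\<in>A. f a x) differentiable (at s)"
  using assms by (induction A rule: finite_induct) auto

lemma Qk_line_diff:
  fixes x :: "real^'n::finite" and f :: "real^'n \<Rightarrow> real"
  assumes "f \<in> Qk k"
  shows "(\<lambda>s. f (x + s *\<^sub>R axis i 1)) differentiable (at s0)"
proof -
  obtain c where f: "f = (\<lambda>x. \<Sum>\<alpha>\<in>{\<alpha>. \<forall>i. \<alpha> i \<le> k}. c \<alpha> * (\<Prod>i\<in>UNIV. (x $ i) ^ (\<alpha> i)))"
    using assms unfolding Qk_def by blast
  have fin: "finite {\<alpha>::'n \<Rightarrow> nat. \<forall>i. \<alpha> i \<le> k}"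
  proof -
    have "{\<alpha>::'n \<Rightarrow> nat. \<forall>i. \<alpha> i \<le> k} \<subseteq> {\<alpha>. \<forall>i. \<alpha> i \<in> {..k}}" by auto
    moreover have "finite {\<alpha>::'n \<Rightarrow> nat. \<forall>i. \<alpha> i \<in> {..k}}"
      using finite_PiE[of "UNIV::'n set" "\<lambda>_. {..k}"] by (simp add: PiE_UNIV_domain Pi_def)
    ultimately show ?thesis by (rule finite_subset)
  qed
  have comp: "(\<lambda>s. (x + s *\<^sub>R axis i 1) $ j) differentiable (at s0)" for j
    by (simp add: axis_def)
  show ?thesis unfolding f
    by (intro differentiable_sum fin ballI differentiable_mult differentiable_const
          differentiable_prod_fin finite_UNIV differentiable_power comp) auto
qed

lemma deriv_zero_side:
  fixes d :: "real \<Rightarrow> real"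
  assumes D: "(d has_real_derivative D) (at 0)" and e: "e > 0"
    and z: "(\<forall>s\<in>{0..e}. d s = 0) \<or> (\<forall>s\<in>{-e..0}. d s = 0)"
  shows "D = 0"
proof -
  have lim: "((\<lambda>h. (d (0 + h) - d 0) / h) \<longlongrightarrow> D) (at 0)"
    using D by (simp add: DERIV_def)
  from z show ?thesis
  proof
    assume z: "\<forall>s\<in>{0..e}. d s = 0"
    have l1: "((\<lambda>h. (d (0 + h) - d 0) / h) \<longlongrightarrow> D) (at_right 0)"
      using lim by (simp add: filterlim_at_split)
    have ev: "eventually (\<lambda>h. 0 = (d (0 + h) - d 0) / h) (at_right (0::real))"
      using eventually_at_right_real[OF e] by eventually_elim (use z in auto)
    have "((\<lambda>h. (d (0 + h) - d 0) / h) \<longlongrightarrow> 0) (at_right 0)"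
      by (rule Lim_transform_eventually[OF tendsto_const ev])
    then show ?thesis using l1 tendsto_unique trivial_limit_at_right_real by blast
  next
    assume z: "\<forall>s\<in>{-e..0}. d s = 0"
    have l1: "((\<lambda>h. (d (0 + h) - d 0) / h) \<longlongrightarrow> D) (at_left 0)"
      using lim by (simp add: filterlim_at_split)
    have "-e < (0::real)" using e by simp
    have ev: "eventually (\<lambda>h. 0 = (d (0 + h) - d 0) / h) (at_left (0::real))"
      using eventually_at_left_real[OF \<open>-e < 0\<close>] by eventually_elim (use z in auto)
    have "((\<lambda>h. (d (0 + h) - d 0) / h) \<longlongrightarrow> 0) (at_left 0)"
      by (rule Lim_transform_eventually[OF tendsto_const ev])
    then show ?thesis using l1 tendsto_unique trivial_limit_at_left_real by blast
  qed
qed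

lemma line_in_cell:
  fixes x :: "real^'n::finite"
  assumes "x \<in> cell t m" "t i (m i) \<le> x $ i + s" "x $ i + s \<le> t i (m i + 1)"
  shows "x + s *\<^sub>R axis i 1 \<in> cell t m"
  using assms unfolding cell_def mem_box_cart by (auto simp: axis_def)

lemma partial_eq_on_cell:
  fixes f g :: "real^'n::finite \<Rightarrow> real"
  assumes grid: "\<And>i. strict_mono (t i)" and f: "f \<in> Qk k" and g: "g \<in> Qk k'"
    and fg: "\<forall>y\<in>cell t m. f y = g y" and x: "x \<in> cell t m"
  shows "partial f i x = partial g i x"
proof -
  define F where "F = (\<lambda>s. f (x + s *\<^sub>R axis i 1))"
  define G where "G = (\<lambda>s. g (x + s *\<^sub>R axis i 1))"
  have dF: "(F has_real_derivative deriv F 0) (at 0)"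
    unfolding DERIV_deriv_iff_real_differentiable F_def by (rule Qk_line_diff[OF f])
  have dG: "(G has_real_derivative deriv G 0) (at 0)"
    unfolding DERIV_deriv_iff_real_differentiable G_def by (rule Qk_line_diff[OF g])
  have dd: "((\<lambda>s. F s - G s) has_real_derivative (deriv F 0 - deriv G 0)) (at 0)"
    using DERIV_diff[OF dF dG] .
  have lohi: "t i (m i) < t i (m i + 1)" using grid[of i] by (simp add: strict_mono_def)
  have xi: "t i (m i) \<le> x $ i" "x $ i \<le> t i (m i + 1)"
    using x unfolding cell_def mem_box_cart by auto
  have "\<exists>e>0. (\<forall>s\<in>{0..e}. F s - G s = 0) \<or> (\<forall>s\<in>{-e..0}. F s - G s = 0)"
  proof (cases "x $ i < t i (m i + 1)")
    case True
    show ?thesis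
      apply (rule exI[of _ "t i (m i + 1) - x $ i"])
      using True xi fg line_in_cell[OF x] unfolding F_def G_def by auto
  next
    case False
    then have "x $ i = t i (m i + 1)" using xi by auto
    then show ?thesis
      apply (intro exI[of _ "t i (m i + 1) - t i (m i)"])
      using lohi xi fg line_in_cell[OF x] unfolding F_def G_def by auto
  qed
  then obtain e where "e > 0" "(\<forall>s\<in>{0..e}. F s - G s = 0) \<or> (\<forall>s\<in>{-e..0}. F s - G s = 0)"
    by blast
  from deriv_zero_side[OF dd this] show ?thesis
    unfolding partial_def F_def G_def by simp
qed

lemma face_pt:
  fixes u w v :: "('n::finite \<Rightarrow> int) \<Rightarrow> real^'n \<Rightarrow> real" and y :: "real^'n"
  assumes PM: "P \<subseteq> M"
    and pm: "m \<in> P \<Longrightarrow> u m y = w m y \<and> grad (u m) y = grad (w m) y"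
    and ps: "shift m i \<in> P \<Longrightarrow> u (shift m i) y = w (shift m i) y \<and> grad (u (shift m i)) y = grad (w (shift m i)) y"
    and nm: "m \<in> M - P \<Longrightarrow> v m y = 0 \<and> grad (v m) y = 0"
    and ns: "shift m i \<in> M - P \<Longrightarrow> v (shift m i) y = 0 \<and> grad (v (shift m i)) y = 0"
    and xm: "m \<in> P \<Longrightarrow> shift m i \<in> M - P \<Longrightarrow> v m y = 0 \<and> grad (v m) y $ i = 0"
    and xs: "shift m i \<in> P \<Longrightarrow> m \<in> M - P \<Longrightarrow> v (shift m i) y = 0 \<and> grad (v (shift m i)) y $ i = 0"
  shows "g * (jump M u m i y \<bullet> jump M v m i y) - avg_grad M u m i y \<bullet> jump M v m i y
          - jump M u m i y \<bullet> avg_grad M v m i y =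
         g * (jump M w m i y \<bullet> jump M v m i y) - avg_grad M w m i y \<bullet> jump M v m i y
          - jump M w m i y \<bullet> avg_grad M v m i y"
proof (cases "m \<in> M"; cases "shift m i \<in> M"; cases "m \<in> P"; cases "shift m i \<in> P")
qed (use PM pm ps nm ns xm xs in \<open>auto simp: jump_def avg_grad_def inner_add_left inner_add_right inner_axis inner_axis' algebra_simps\<close>)

lemma frontier_up:
  fixes t :: "'n::finite \<Rightarrow> int \<Rightarrow> real"
  assumes grid: "\<And>i. strict_mono (t i)" and m: "m \<in> patch_cells M q" and mi: "m i = q i"
  shows "cell_face t m i (t i (m i + 1)) \<subseteq> frontier (patch t M q)"
proof
  fix y assume y: "y \<in> cell_face t m i (t i (m i + 1))"
  have yP: "y \<in> patch t M q" using y m unfolding cell_face_def patch_def by auto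
  have "y \<notin> interior (patch t M q)"
  proof
    assume "y \<in> interior (patch t M q)"
    then obtain e where e: "e > 0" "ball y e \<subseteq> patch t M q"
      using mem_interior by blast
    define z where "z = y + (e/2) *\<^sub>R axis i (1::real)"
    have "dist y z < e" using e by (simp add: z_def dist_norm)
    then have "z \<in> patch t M q" using e by auto
    then obtain m' where m': "m' \<in> patch_cells M q" "z \<in> cell t m'"
      unfolding patch_def by auto
    have "z $ i \<le> t i (m' i + 1)" using m'(2) unfolding cell_def mem_box_cart by auto
    also have "\<dots> \<le> t i (q i + 1)"
    proof -
      have "m' i \<le> q i" proof -
        have "m' i = q i - 1 \<or> m' i = q i" using m'(1) unfolding patch_cells_def by blast
        then show ?thesis by linarith
      qed
      then show ?thesis using grid[of i] by (simp add: strict_mono_less_eq)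
    qed
    finally have "z $ i \<le> t i (q i + 1)" .
    moreover have "z $ i = t i (q i + 1) + e/2"
      using y mi unfolding z_def cell_face_def by (simp add: axis_def)
    ultimately show False using e by simp
  qed
  then show "y \<in> frontier (patch t M q)"
    using yP closure_subset unfolding frontier_def by auto
qed

lemma frontier_down:
  fixes t :: "'n::finite \<Rightarrow> int \<Rightarrow> real"
  assumes grid: "\<And>i. strict_mono (t i)" and m: "m \<in> patch_cells M q" and mi: "m i = q i - 1"
  shows "cell_face t m i (t i (m i)) \<subseteq> frontier (patch t M q)"
proof
  fix y assume y: "y \<in> cell_face t m i (t i (m i))"
  have yP: "y \<in> patch t M q" using y m unfolding cell_face_def patch_def by auto
  have "y \<notin> interior (patch t M q)"
  proof
    assume "y \<in> interior (patch t M q)"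
    then obtain e where e: "e > 0" "ball y e \<subseteq> patch t M q"
      using mem_interior by blast
    define z where "z = y - (e/2) *\<^sub>R axis i (1::real)"
    have "dist y z < e" using e by (simp add: z_def dist_norm)
    then have "z \<in> patch t M q" using e by auto
    then obtain m' where m': "m' \<in> patch_cells M q" "z \<in> cell t m'"
      unfolding patch_def by auto
    have "t i (q i - 1) \<le> t i (m' i)"
    proof -
      have "q i - 1 \<le> m' i" proof -
        have "m' i = q i - 1 \<or> m' i = q i" using m'(1) unfolding patch_cells_def by blast
        then show ?thesis by linarith
      qed
      then show ?thesis using grid[of i] by (simp add: strict_mono_less_eq)
    qed
    also have "\<dots> \<le> z $ i" using m'(2) unfolding cell_def mem_box_cart by auto
    finally have "t i (q i - 1) \<le> z $ i" .
    moreover have "z $ i = t i (q i - 1) - e/2"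
      using y mi unfolding z_def cell_face_def by (simp add: axis_def)
    ultimately show False using e by simp
  qed
  then show "y \<in> frontier (patch t M q)"
    using yP closure_subset unfolding frontier_def by auto
qed

lemma grad_eq_on_cell:
  fixes f g :: "real^'n::finite \<Rightarrow> real"
  assumes "\<And>i. strict_mono (t i)" "f \<in> Qk k" "g \<in> Qk k'"
    "\<forall>y\<in>cell t m. f y = g y" "x \<in> cell t m"
  shows "grad f x = grad g x"
  using partial_eq_on_cell[OF assms] by (simp add: grad_def vec_eq_iff)

lemma zero_Qk: "(\<lambda>_. 0) \<in> Qk k"
  unfolding Qk_def by (rule CollectI, rule exI[of _ "\<lambda>_. 0"]) simp

lemma grad_zero: "grad (\<lambda>_. 0) x = 0"
  by (simp add: grad_def partial_def vec_eq_iff)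

theorem mainTheorem1:
  fixes t :: "'n::finite \<Rightarrow> int \<Rightarrow> real"
    and M :: "('n \<Rightarrow> int) set"
    and \<Omega> :: "(real^'n) set"
    and k :: nat
    and \<gamma> :: "(('n \<Rightarrow> int) \<times> 'n) \<Rightarrow> real"
    and q :: "'n \<Rightarrow> int"
    and u w v :: "('n \<Rightarrow> int) \<Rightarrow> real^'n \<Rightarrow> real"
  assumes dim: "CARD('n) = 2 \<or> CARD('n) = 3"
    and grid: "\<And>i. strict_mono (t i)"
    and mesh: "finite M" "M \<noteq> {}"
    and dom: "\<Omega> = interior (\<Union>m\<in>M. cell t m)" "connected \<Omega>"
    and deg: "k \<ge> 1"
    and pen: "\<And>F. F \<in> faces M \<Longrightarrow> \<gamma> F > 0"
    and vertex: "patch_cells M q \<noteq> {}"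
    and u: "u \<in> Vh k M" and w: "w \<in> Vh k M"
    and uw: "\<And>m x. m \<in> patch_cells M q \<Longrightarrow> x \<in> cell t m \<Longrightarrow> u m x = w m x"
    and v: "v \<in> Vj k t M q"
  shows "a_h t M \<gamma> u v = a_h t M \<gamma> w v"
proof -
  define P where "P = patch_cells M q"
  have PM: "P \<subseteq> M" unfolding P_def patch_cells_def by auto
  have uQ: "\<And>m. m \<in> M \<Longrightarrow> u m \<in> Qk k" using u unfolding Vh_def by auto
  have wQ: "\<And>m. m \<in> M \<Longrightarrow> w m \<in> Qk k" using w unfolding Vh_def by auto
  have vQ: "\<And>m. m \<in> M \<Longrightarrow> v m \<in> Qk k" using v unfolding Vj_def Vh_def by auto
  have v0: "\<And>m x. m \<in> M - P \<Longrightarrow> x \<in> cell t m \<Longrightarrow> v m x = 0"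
    using v unfolding Vj_def P_def by auto
  have vf: "\<And>m i c x. m \<in> P \<Longrightarrow> c \<in> {t i (m i), t i (m i + 1)} \<Longrightarrow>
      cell_face t m i c \<subseteq> frontier (patch t M q) \<Longrightarrow> x \<in> cell_face t m i c \<Longrightarrow>
      v m x = 0 \<and> partial (v m) i x = 0"
    using v unfolding Vj_def P_def by blast
  have PU: "\<And>m x. m \<in> P \<Longrightarrow> x \<in> cell t m \<Longrightarrow> u m x = w m x \<and> grad (u m) x = grad (w m) x"
  proof -
    fix m x assume m: "m \<in> P" and x: "x \<in> cell t m"
    have "m \<in> M" using m PM by auto
    then show "u m x = w m x \<and> grad (u m) x = grad (w m) x"
      using uw[of m] m x grad_eq_on_cell[OF grid uQ wQ _ x] unfolding P_def by blast
  qed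
  have NV: "\<And>m x. m \<in> M - P \<Longrightarrow> x \<in> cell t m \<Longrightarrow> v m x = 0 \<and> grad (v m) x = 0"
  proof -
    fix m x assume m: "m \<in> M - P" and x: "x \<in> cell t m"
    have "grad (v m) x = grad (\<lambda>_. 0) x"
      by (rule grad_eq_on_cell[OF grid vQ zero_Qk _ x]) (use m v0 in auto)
    then show "v m x = 0 \<and> grad (v m) x = 0" using v0[OF m x] grad_zero by simp
  qed
  have vol: "(\<Sum>m\<in>M. integral (cell t m) (\<lambda>x. grad (u m) x \<bullet> grad (v m) x)) =
             (\<Sum>m\<in>M. integral (cell t m) (\<lambda>x. grad (w m) x \<bullet> grad (v m) x))"
  proof (rule sum.cong[OF refl], rule integral_cong)
    fix m x assume m: "m \<in> M" and x: "x \<in> cell t m"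
    show "grad (u m) x \<bullet> grad (v m) x = grad (w m) x \<bullet> grad (v m) x"
      using PU[OF _ x] NV[OF _ x] m by (cases "m \<in> P") auto
  qed
  have fac: "face_int t m i (\<lambda>x.
         \<gamma> (m, i) * (jump M u m i x \<bullet> jump M v m i x)
         - avg_grad M u m i x \<bullet> jump M v m i x
         - jump M u m i x \<bullet> avg_grad M v m i x) =
      face_int t m i (\<lambda>x.
         \<gamma> (m, i) * (jump M w m i x \<bullet> jump M v m i x)
         - avg_grad M w m i x \<bullet> jump M v m i x
         - jump M w m i x \<bullet> avg_grad M v m i x)" for m i
    unfolding face_int_def
  proof (rule integral_cong, goal_cases)
    case (1 x)
    then have x: "x \<in> cbox (\<chi> j. if j = i then 0 else t j (m j)) (\<chi> j. if j = i then 1 else t j (m j + 1))" .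
    define y :: "real^'n" where "y = (\<chi> j. if j = i then t i (m i + 1) else x $ j)"
    define s where "s = shift m i"
    have sj: "s j = (if j = i then m i + 1 else m j)" for j unfolding s_def shift_def by auto
    have xj: "t j (m j) \<le> x $ j \<and> x $ j \<le> t j (m j + 1)" if "j \<noteq> i" for j
    proof -
      have "(\<chi> j. if j = i then 0 else t j (m j)) $ j \<le> x $ j \<and> x $ j \<le> (\<chi> j. if j = i then 1 else t j (m j + 1)) $ j"
        using x unfolding mem_box_cart by blast
      then show ?thesis using that by simp
    qed
    have lt: "t i (m i) < t i (m i + 1)" "t i (m i + 1) < t i (m i + 1 + 1)"
      using grid[of i] by (simp_all add: strict_mono_def)
    have ym: "y \<in> cell t m" unfolding cell_def mem_box_cart y_def using xj lt by auto
    have ys: "y \<in> cell t s" unfolding cell_def mem_box_cart y_def using xj lt by (auto simp: sj)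
    have yfm: "y \<in> cell_face t m i (t i (m i + 1))" using ym unfolding cell_face_def y_def by simp
    have yfs: "y \<in> cell_face t s i (t i (s i))" using ys unfolding cell_face_def y_def by (simp add: sj)
    have xm: "v m y = 0 \<and> grad (v m) y $ i = 0" if a: "m \<in> P" "s \<in> M - P"
    proof -
      have "m i = q i"
      proof -
        have mq: "\<forall>j. m j = q j - 1 \<or> m j = q j" using a(1) unfolding P_def patch_cells_def by auto
        have "\<not> (\<forall>j. s j = q j - 1 \<or> s j = q j)" using a(2) unfolding P_def patch_cells_def by auto
        then obtain j where "\<not> (s j = q j - 1 \<or> s j = q j)" by blast
        then show ?thesis using mq[rule_format, of j] mq[rule_format, of i] sj[of j]
          by (cases "j = i") auto
      qed
      then have "cell_face t m i (t i (m i + 1)) \<subseteq> frontier (patch t M q)"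
        using frontier_up[where t=t and m=m and M=M and q=q and i=i, OF grid] a(1) unfolding P_def by blast
      from vf[OF a(1) _ this yfm] show ?thesis by (simp add: grad_def)
    qed
    have xs: "v s y = 0 \<and> grad (v s) y $ i = 0" if a: "s \<in> P" "m \<in> M - P"
    proof -
      have "s i = q i - 1"
      proof -
        have sq: "\<forall>j. s j = q j - 1 \<or> s j = q j" using a(1) unfolding P_def patch_cells_def by auto
        have "\<not> (\<forall>j. m j = q j - 1 \<or> m j = q j)" using a(2) unfolding P_def patch_cells_def by auto
        then obtain j where "\<not> (m j = q j - 1 \<or> m j = q j)" by blast
        then show ?thesis using sq[rule_format, of j] sq[rule_format, of i] sj[of j] sj[of i]
          by (cases "j = i") auto
      qed
      then have "cell_face t s i (t i (s i)) \<subseteq> frontier (patch t M q)"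
        using frontier_down[where t=t and m=s and M=M and q=q and i=i, OF grid] a(1) unfolding P_def by blast
      from vf[OF a(1) _ this yfs] show ?thesis by (simp add: grad_def)
    qed
    have "\<gamma> (m, i) * (jump M u m i y \<bullet> jump M v m i y) - avg_grad M u m i y \<bullet> jump M v m i y
          - jump M u m i y \<bullet> avg_grad M v m i y =
         \<gamma> (m, i) * (jump M w m i y \<bullet> jump M v m i y) - avg_grad M w m i y \<bullet> jump M v m i y
          - jump M w m i y \<bullet> avg_grad M v m i y"
      using ys xs xm unfolding s_def
      apply -
      apply (rule face_pt[OF PM])
      subgoal using PU[OF _ ym] by blast
      subgoal using PU by blast
      subgoal using NV[OF _ ym] by blast
      subgoal using NV by blast
      subgoal by blast
      subgoal by blast
      done
    then show ?case unfolding y_def by simp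
  qed
  show ?thesis unfolding a_h_def vol
    by (rule arg_cong[where f = "\<lambda>z. _ + z"], rule sum.cong[OF refl]) (auto simp: fac)
qed

end
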